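(* Let $I,J$ be infinite sets with $|I|<|J|$. Then $\mathbf{Lat}_I$ does not have 2-fold subobject decompositions over $J$: there exist a family $(L_j)_{j\in J}$ of $I$-complete lattices and two distinct $I$-complete sublattices $S\neq T$ of $\prod_{j\in J}L_j$ whose images under the projection $\prod_{j\in J}L_j\to L_k\times L_l$ coincide for all distinct $k,l\in J$.
   Context: An $I$-complete lattice is a lattice in which every family $(x_i)_{i\in I}$ of elements has a meet and a join; homomorphisms preserve $I$-indexed meets and joins; $\mathbf{Lat}_I$ is the resulting category, with componentwise products and with subobjects the $I$-complete sublattices. A category has 2-fold subobject decompositions over $J$ if for every $J$-indexed family of objects, any two subobjects of their product having the same images in all products $L_k\times L_l$ ($k\neq l$ in $J$) are equal. *)

theory Defs
  imports Main "HOL-Library.FuncSet"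
begin

definition is_inf :: "'a set \<Rightarrow> ('a \<Rightarrow> 'a \<Rightarrow> bool) \<Rightarrow> 'a set \<Rightarrow> 'a \<Rightarrow> bool" where
  "is_inf A le X m \<longleftrightarrow> m \<in> A \<and> (\<forall>x\<in>X. le m x) \<and> (\<forall>y\<in>A. (\<forall>x\<in>X. le y x) \<longrightarrow> le y m)"

definition is_sup :: "'a set \<Rightarrow> ('a \<Rightarrow> 'a \<Rightarrow> bool) \<Rightarrow> 'a set \<Rightarrow> 'a \<Rightarrow> bool" where
  "is_sup A le X m \<longleftrightarrow> m \<in> A \<and> (\<forall>x\<in>X. le x m) \<and> (\<forall>y\<in>A. (\<forall>x\<in>X. le x y) \<longrightarrow> le m y)"

definition lattice_on :: "'a set \<Rightarrow> ('a \<Rightarrow> 'a \<Rightarrow> bool) \<Rightarrow> bool" where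
  "lattice_on A le \<longleftrightarrow> A \<noteq> {} \<and>
     (\<forall>x\<in>A. le x x) \<and>
     (\<forall>x\<in>A. \<forall>y\<in>A. le x y \<and> le y x \<longrightarrow> x = y) \<and>
     (\<forall>x\<in>A. \<forall>y\<in>A. \<forall>z\<in>A. le x y \<and> le y z \<longrightarrow> le x z) \<and>
     (\<forall>x\<in>A. \<forall>y\<in>A. (\<exists>m. is_inf A le {x, y} m) \<and> (\<exists>m. is_sup A le {x, y} m))"

definition I_complete_lattice :: "'i set \<Rightarrow> 'a set \<Rightarrow> ('a \<Rightarrow> 'a \<Rightarrow> bool) \<Rightarrow> bool" where
  "I_complete_lattice I A le \<longleftrightarrow> lattice_on A le \<and>
     (\<forall>x :: 'i \<Rightarrow> 'a. x ` I \<subseteq> A \<longrightarrow>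
        (\<exists>m. is_inf A le (x ` I) m) \<and> (\<exists>m. is_sup A le (x ` I) m))"

definition prod_carrier :: "'j set \<Rightarrow> ('j \<Rightarrow> 'a set) \<Rightarrow> ('j \<Rightarrow> 'a) set" where
  "prod_carrier J C = PiE J C"

definition prod_le :: "'j set \<Rightarrow> ('j \<Rightarrow> 'a \<Rightarrow> 'a \<Rightarrow> bool) \<Rightarrow> ('j \<Rightarrow> 'a) \<Rightarrow> ('j \<Rightarrow> 'a) \<Rightarrow> bool" where
  "prod_le J R f g \<longleftrightarrow> (\<forall>j\<in>J. R j (f j) (g j))"

definition I_complete_sublattice ::
  "'i set \<Rightarrow> 'a set \<Rightarrow> ('a \<Rightarrow> 'a \<Rightarrow> bool) \<Rightarrow> 'a set \<Rightarrow> bool" where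
  "I_complete_sublattice I A le S \<longleftrightarrow> S \<noteq> {} \<and> S \<subseteq> A \<and>
     (\<forall>x\<in>S. \<forall>y\<in>S. \<forall>m. (is_inf A le {x, y} m \<or> is_sup A le {x, y} m) \<longrightarrow> m \<in> S) \<and>
     (\<forall>x :: 'i \<Rightarrow> 'a. x ` I \<subseteq> S \<longrightarrow>
        (\<forall>m. (is_inf A le (x ` I) m \<or> is_sup A le (x ` I) m) \<longrightarrow> m \<in> S))"

end

theory Submission
  imports Defs
begin

unbundle cardinal_syntax

lemma fin_le_inf: "finite A \<Longrightarrow> infinite B \<Longrightarrow> |A| \<le>o |B|"
proof (rule ccontr)
  assume "finite A" "infinite B" "\<not> |A| \<le>o |B|"
  then have "|B| \<le>o |A|" using ordLeq_total[OF card_of_Well_order card_of_Well_order] by blast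
  then show False using card_of_ordLeq_finite \<open>finite A\<close> \<open>infinite B\<close> by blast
qed

definition C0 :: "'j \<Rightarrow> 'j set set" where "C0 j = {{}, UNIV}"
definition R0 :: "'j \<Rightarrow> 'j set \<Rightarrow> 'j set \<Rightarrow> bool" where "R0 j a b = (a \<subseteq> b)"

lemma two_Inter: "(Y :: 'a set set) \<subseteq> {{}, UNIV} \<Longrightarrow> \<Inter>Y \<in> {{}, UNIV}"
  by (cases "{} \<in> Y") auto

lemma two_Union: "(Y :: 'a set set) \<subseteq> {{}, UNIV} \<Longrightarrow> \<Union>Y \<in> {{}, UNIV}"
  by (cases "UNIV \<in> Y") auto

lemma is_inf_Inter: "Y \<subseteq> A \<Longrightarrow> \<Inter>Y \<in> A \<Longrightarrow> is_inf A (\<subseteq>) Y (\<Inter>Y)"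
  unfolding is_inf_def by auto

lemma is_sup_Union: "Y \<subseteq> A \<Longrightarrow> \<Union>Y \<in> A \<Longrightarrow> is_sup A (\<subseteq>) Y (\<Union>Y)"
  unfolding is_sup_def by auto

lemma two_complete: "I_complete_lattice I {{}, UNIV :: 'a set} (R0 j)"
proof -
  have R: "R0 j = (\<subseteq>)" by (auto simp: R0_def fun_eq_iff)
  have inf: "\<exists>m. is_inf {{}, UNIV :: 'a set} (\<subseteq>) Y m" if "Y \<subseteq> {{}, UNIV}" for Y
    using is_inf_Inter[OF that two_Inter[OF that]] by blast
  have sup: "\<exists>m. is_sup {{}, UNIV :: 'a set} (\<subseteq>) Y m" if "Y \<subseteq> {{}, UNIV}" for Y
    using is_sup_Union[OF that two_Union[OF that]] by blast
  show ?thesis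
    unfolding I_complete_lattice_def lattice_on_def R
    using inf sup by auto
qed

lemma inf_supp:
  assumes X: "X \<subseteq> PiE J C0" "X \<noteq> {}" and m: "is_inf (PiE J C0) (prod_le J R0) X m"
  shows "m \<in> PiE J C0 \<and> {j\<in>J. m j = UNIV} = {j\<in>J. \<forall>x\<in>X. x j = UNIV}"
proof -
  have mP: "m \<in> PiE J C0" and lb: "\<forall>x\<in>X. prod_le J R0 m x"
    and gr: "\<forall>y\<in>PiE J C0. (\<forall>x\<in>X. prod_le J R0 y x) \<longrightarrow> prod_le J R0 y m"
    using m unfolding is_inf_def by auto
  have "j \<in> J \<Longrightarrow> m j = UNIV \<longleftrightarrow> (\<forall>x\<in>X. x j = UNIV)" for j
  proof
    assume j: "j \<in> J" and "m j = UNIV"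
    then show "\<forall>x\<in>X. x j = UNIV" using lb by (auto simp: prod_le_def R0_def)
  next
    assume j: "j \<in> J" and all: "\<forall>x\<in>X. x j = UNIV"
    define g where "g = m(j := UNIV)"
    have gP: "g \<in> PiE J C0" unfolding g_def using mP j
      by (auto simp: PiE_iff C0_def extensional_def)
    have "\<forall>x\<in>X. prod_le J R0 g x"
      using lb all by (auto simp: prod_le_def R0_def g_def)
    then have "prod_le J R0 g m" using gr gP by blast
    then have "R0 j (g j) (m j)" using j unfolding prod_le_def by blast
    then show "m j = UNIV" by (auto simp: R0_def g_def)
  qed
  then have "{j\<in>J. m j = UNIV} = {j\<in>J. \<forall>x\<in>X. x j = UNIV}" by (simp cong: conj_cong)
  then show ?thesis using mP by blast
qed

lemma sup_supp:
  assumes X: "X \<subseteq> PiE J C0" and m: "is_sup (PiE J C0) (prod_le J R0) X m"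
  shows "m \<in> PiE J C0 \<and> {j\<in>J. m j = UNIV} = {j\<in>J. \<exists>x\<in>X. x j = UNIV}"
proof -
  have mP: "m \<in> PiE J C0" and ub: "\<forall>x\<in>X. prod_le J R0 x m"
    and le: "\<forall>y\<in>PiE J C0. (\<forall>x\<in>X. prod_le J R0 x y) \<longrightarrow> prod_le J R0 m y"
    using m unfolding is_sup_def by auto
  have "j \<in> J \<Longrightarrow> m j = UNIV \<longleftrightarrow> (\<exists>x\<in>X. x j = UNIV)" for j
  proof
    assume j: "j \<in> J" and "\<exists>x\<in>X. x j = UNIV"
    then show "m j = UNIV" using ub by (auto simp: prod_le_def R0_def)
  next
    assume j: "j \<in> J" and mj: "m j = UNIV"
    show "\<exists>x\<in>X. x j = UNIV"
    proof (rule ccontr)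
      assume "\<not> ?thesis"
      have all: "\<forall>x\<in>X. x j = {}"
      proof (intro ballI)
        fix x assume x: "x \<in> X"
        then have "x j \<in> C0 j" using X j by (blast intro: PiE_mem)
        then show "x j = {}" using \<open>\<not> (\<exists>x\<in>X. x j = UNIV)\<close> x by (auto simp: C0_def)
      qed
      define g where "g = m(j := {})"
      have gP: "g \<in> PiE J C0" unfolding g_def using mP j
        by (auto simp: PiE_iff C0_def extensional_def)
      have "\<forall>x\<in>X. prod_le J R0 x g"
        using ub all by (auto simp: prod_le_def R0_def g_def)
      then have "prod_le J R0 m g" using le gP by blast
      then have "R0 j (m j) (g j)" using j unfolding prod_le_def by blast
      then show False using mj by (simp add: R0_def g_def)
    qed
  qed
  then have "{j\<in>J. m j = UNIV} = {j\<in>J. \<exists>x\<in>X. x j = UNIV}" by (simp cong: conj_cong)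
  then show ?thesis using mP by blast
qed

definition T0 :: "'i set \<Rightarrow> 'j set \<Rightarrow> ('j \<Rightarrow> 'j set) set" where
  "T0 I J = {f \<in> PiE J C0. |{j\<in>J. f j = UNIV}| \<le>o |I| \<or> {j\<in>J. f j = UNIV} = J}"

lemma T0_closed:
  assumes I: "infinite I" and X: "X \<subseteq> T0 I J" "X \<noteq> {}" "|X| \<le>o |I|"
    and m: "is_inf (PiE J C0) (prod_le J R0) X m \<or> is_sup (PiE J C0) (prod_le J R0) X m"
  shows "m \<in> T0 I J"
proof -
  have XP: "X \<subseteq> PiE J C0" using X unfolding T0_def by auto
  show ?thesis
  proof (cases "is_inf (PiE J C0) (prod_le J R0) X m")
    case True
    note h = inf_supp[OF XP X(2) True]
    show ?thesis
    proof (cases "\<exists>x\<in>X. |{j\<in>J. x j = UNIV}| \<le>o |I|")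
      case True
      then obtain x where x: "x \<in> X" "|{j\<in>J. x j = UNIV}| \<le>o |I|" by blast
      have "{j\<in>J. m j = UNIV} \<subseteq> {j\<in>J. x j = UNIV}" using h x(1) by auto
      then have "|{j\<in>J. m j = UNIV}| \<le>o |I|"
        using card_of_mono1 ordLeq_transitive x(2) by blast
      then show ?thesis using h unfolding T0_def by auto
    next
      case False
      then have "\<forall>x\<in>X. {j\<in>J. x j = UNIV} = J" using X(1) unfolding T0_def by auto
      then have "{j\<in>J. m j = UNIV} = J" using h by auto
      then show ?thesis using h unfolding T0_def by auto
    qed
  next
    case False
    then have S: "is_sup (PiE J C0) (prod_le J R0) X m" using m by blast
    note h = sup_supp[OF XP S]
    show ?thesis
    proof (cases "\<exists>x\<in>X. {j\<in>J. x j = UNIV} = J")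
      case True
      then have "{j\<in>J. m j = UNIV} = J" using h by auto
      then show ?thesis using h unfolding T0_def by auto
    next
      case False
      then have sm: "\<forall>x\<in>X. |{j\<in>J. x j = UNIV}| \<le>o |I|" using X(1) unfolding T0_def by auto
      have eq: "{j\<in>J. m j = UNIV} = (\<Union>x\<in>X. {j\<in>J. x j = UNIV})" using h by auto
      have "|\<Union>x\<in>X. {j\<in>J. x j = UNIV}| \<le>o |I|"
        using card_of_UNION_ordLeq_infinite[OF I X(3) sm] .
      then show ?thesis using h eq unfolding T0_def by auto
    qed
  qed
qed

lemma T0_sub:
  assumes I: "infinite I"
  shows "I_complete_sublattice I (PiE J C0) (prod_le J R0) (T0 I J)"
proof -
  have f1: "(\<lambda>j\<in>J. UNIV) \<in> PiE J C0" by (auto simp: C0_def)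
  have f2: "{j\<in>J. (\<lambda>j\<in>J. UNIV) j = UNIV} = J" by auto
  have full: "(\<lambda>j\<in>J. UNIV) \<in> T0 I J" unfolding T0_def using f1 f2 by blast
  have bin: "m \<in> T0 I J" if "x \<in> T0 I J" "y \<in> T0 I J"
    "is_inf (PiE J C0) (prod_le J R0) {x, y} m \<or> is_sup (PiE J C0) (prod_le J R0) {x, y} m" for x y m
  proof (rule T0_closed[OF I _ _ _ that(3)])
    show "{x, y} \<subseteq> T0 I J" using that by auto
    show "{x, y} \<noteq> {}" by auto
    show "|{x, y}| \<le>o |I|" using I by (intro fin_le_inf) auto
  qed
  have fam: "m \<in> T0 I J" if "x ` I \<subseteq> T0 I J"
    "is_inf (PiE J C0) (prod_le J R0) (x ` I) m \<or> is_sup (PiE J C0) (prod_le J R0) (x ` I) m" for x m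
  proof (rule T0_closed[OF I that(1) _ _ that(2)])
    show "x ` I \<noteq> {}" using I by auto
    show "|x ` I| \<le>o |I|" by (rule card_of_image)
  qed
  have sub: "T0 I J \<subseteq> PiE J C0" unfolding T0_def by blast
  have ne: "T0 I J \<noteq> {}" using full by blast
  show ?thesis unfolding I_complete_sublattice_def
  proof (intro conjI ne sub ballI allI impI)
    fix x y m assume "x \<in> T0 I J" "y \<in> T0 I J"
      "is_inf (PiE J C0) (prod_le J R0) {x, y} m \<or> is_sup (PiE J C0) (prod_le J R0) {x, y} m"
    then show "m \<in> T0 I J" by (rule bin)
  next
    fix x :: "'a \<Rightarrow> 'b \<Rightarrow> 'b set" and m
    assume "x ` I \<subseteq> T0 I J"
      "is_inf (PiE J C0) (prod_le J R0) (x ` I) m \<or> is_sup (PiE J C0) (prod_le J R0) (x ` I) m"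
    then show "m \<in> T0 I J" by (rule fam)
  qed
qed

lemma P_sub:
  shows "I_complete_sublattice I (PiE J C0) (prod_le J R0) (PiE J C0)"
proof -
  have "(\<lambda>j\<in>J. UNIV) \<in> PiE J C0" by (auto simp: C0_def)
  then show ?thesis unfolding I_complete_sublattice_def is_inf_def is_sup_def by blast
qed

theorem proposition4p11:
  fixes I :: "'i set" and J :: "'j set"
  assumes "infinite I" and "infinite J"
    and "(card_of I, card_of J) \<in> ordLess"
  shows "\<exists>(C :: 'j \<Rightarrow> 'j set set) (R :: 'j \<Rightarrow> 'j set \<Rightarrow> 'j set \<Rightarrow> bool) S T.
           (\<forall>j\<in>J. I_complete_lattice I (C j) (R j)) \<and>
           I_complete_sublattice I (prod_carrier J C) (prod_le J R) S \<and>
           I_complete_sublattice I (prod_carrier J C) (prod_le J R) T \<and>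
           S \<noteq> T \<and>
           (\<forall>k\<in>J. \<forall>l\<in>J. k \<noteq> l \<longrightarrow>
              (\<lambda>f. (f k, f l)) ` S = (\<lambda>f. (f k, f l)) ` T)"
proof -
  have lat: "\<forall>j\<in>J. I_complete_lattice I (C0 j) (R0 j)"
    by (auto simp: C0_def intro: two_complete)
  have "J \<noteq> {}" using assms(2) by auto
  then obtain j0 where j0: "j0 \<in> J" by blast
  define h where "h = (\<lambda>j\<in>J. if j = j0 then {} else (UNIV :: 'j set))"
  have hP: "h \<in> PiE J C0" by (auto simp: h_def C0_def)
  have hs: "{j\<in>J. h j = UNIV} = J - {j0}" by (auto simp: h_def)
  have "\<not> |J - {j0}| \<le>o |I|"
  proof
    assume a: "|J - {j0}| \<le>o |I|"
    have b: "|{j0}| \<le>o |I|" using assms(1) by (intro fin_le_inf) auto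
    have "|(J - {j0}) \<union> {j0}| \<le>o |I|"
    proof (rule card_of_Un_ordLeq_infinite_Field[OF _ a b])
      show "infinite (Field (card_of I))" using assms(1) by (simp add: Field_card_of)
      show "Card_order (card_of I)" by (rule card_of_Card_order)
    qed
    moreover have "(J - {j0}) \<union> {j0} = J" using j0 by auto
    ultimately have "|J| \<le>o |I|" by simp
    then show False using assms(3) not_ordLess_ordLeq by blast
  qed
  then have hT: "h \<notin> T0 I J" using hs j0 unfolding T0_def by auto
  have neq: "PiE J C0 \<noteq> T0 I J" using hP hT by blast
  have proj: "(\<lambda>f. (f k, f l)) ` PiE J C0 = (\<lambda>f. (f k, f l)) ` T0 I J"
    if k: "k \<in> J" and l: "l \<in> J" and kl: "k \<noteq> l" for k l
  proof
    have sub: "T0 I J \<subseteq> PiE J C0" unfolding T0_def by blast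
    show "(\<lambda>f. (f k, f l)) ` T0 I J \<subseteq> (\<lambda>f. (f k, f l)) ` PiE J C0"
      by (rule image_mono[OF sub])
  next
    show "(\<lambda>f. (f k, f l)) ` PiE J C0 \<subseteq> (\<lambda>f. (f k, f l)) ` T0 I J"
    proof
      fix p assume "p \<in> (\<lambda>f. (f k, f l)) ` PiE J C0"
      then obtain f where f: "f \<in> PiE J C0" "p = (f k, f l)" by blast
      define g where "g = (\<lambda>j\<in>J. if j = k \<or> j = l then f j else {})"
      have gP: "g \<in> PiE J C0" using f(1) by (auto simp: g_def PiE_iff C0_def)
      have s1: "{j\<in>J. g j = UNIV} \<subseteq> {k, l}" by (auto simp: g_def)
      have s2: "|{k, l}| \<le>o |I|"
        using assms(1) by (intro fin_le_inf) auto
      have "|{j\<in>J. g j = UNIV}| \<le>o |I|"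
        by (rule ordLeq_transitive[OF card_of_mono1[OF s1] s2])
      then have "g \<in> T0 I J" using gP unfolding T0_def by auto
      moreover have "p = (g k, g l)" using f k l by (simp add: g_def)
      ultimately show "p \<in> (\<lambda>f. (f k, f l)) ` T0 I J" by blast
    qed
  qed
  show ?thesis
    apply (rule exI[of _ C0], rule exI[of _ R0], rule exI[of _ "PiE J C0"], rule exI[of _ "T0 I J"])
    unfolding prod_carrier_def
    apply (intro conjI lat P_sub T0_sub[OF assms(1)] neq ballI impI)
    apply (rule proj; assumption)
    done
qed

end
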